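(* Let $P$ be a finite poset (hence a DCPO) and $\theta$ an equivalence relation on $P$. Then $\theta$ is a natural DCPO congruence if and only if $\theta$ is a compatible congruence.
   Context: A subset $D$ of a poset is directed if every finite subset of $D$ has an upper bound in $D$ (in particular $D$ is nonempty). A poset is a DCPO (directed complete partial order) if every directed subset has a join. A map $\phi\colon P\to Q$ between DCPOs is a DCPO map if for every directed $D\subseteq P$, $\phi(D)$ is directed and $\phi(\bigvee D)=\bigvee\phi(D)$. For an equivalence relation $\theta$ with classes $[p]$, the quotient relation is $[p]\leqslant_\theta[q]$ iff there exist $p'\in[p]$, $q'\in[q]$ with $p'\leqslant q'$; $\theta$ is a natural DCPO congruence if the transitive closure of $\leqslant_\theta$ is a partial order on $P/\theta$ making it a DCPO and the canonical map $P\to P/\theta$ is a DCPO map. A $\theta$-circle is a sequence $(p_0,\dots,p_n)$ with $p_0=p_n$ and for each $i$ either $p_{i-1}\,\theta\,p_i$ or $p_{i-1}<p_i$; $\theta$ is a compatible congruence if every $\theta$-circle lies within one equivalence class. *)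

theory Defs
  imports Main
begin

definition directed :: "'a set \<Rightarrow> ('a \<times> 'a) set \<Rightarrow> 'a set \<Rightarrow> bool" where
  "directed A r D \<longleftrightarrow> D \<subseteq> A \<and>
     (\<forall>F. finite F \<and> F \<subseteq> D \<longrightarrow> (\<exists>u\<in>D. \<forall>x\<in>F. (x, u) \<in> r))"

definition is_join :: "'a set \<Rightarrow> ('a \<times> 'a) set \<Rightarrow> 'a set \<Rightarrow> 'a \<Rightarrow> bool" where
  "is_join A r D s \<longleftrightarrow> s \<in> A \<and> (\<forall>x\<in>D. (x, s) \<in> r) \<and>
     (\<forall>u\<in>A. (\<forall>x\<in>D. (x, u) \<in> r) \<longrightarrow> (s, u) \<in> r)"

definition dcpo :: "'a set \<Rightarrow> ('a \<times> 'a) set \<Rightarrow> bool" where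
  "dcpo A r \<longleftrightarrow> partial_order_on A r \<and> (\<forall>D. directed A r D \<longrightarrow> (\<exists>s. is_join A r D s))"

definition dcpo_map ::
  "'a set \<Rightarrow> ('a \<times> 'a) set \<Rightarrow> 'b set \<Rightarrow> ('b \<times> 'b) set \<Rightarrow> ('a \<Rightarrow> 'b) \<Rightarrow> bool" where
  "dcpo_map A r B s \<phi> \<longleftrightarrow> \<phi> ` A \<subseteq> B \<and>
     (\<forall>D x. directed A r D \<and> is_join A r D x \<longrightarrow>
        directed B s (\<phi> ` D) \<and> is_join B s (\<phi> ` D) (\<phi> x))"

definition quot_rel :: "'a set \<Rightarrow> ('a \<times> 'a) set \<Rightarrow> ('a \<times> 'a) set \<Rightarrow> ('a set \<times> 'a set) set" where
  "quot_rel A r \<theta> = {(X, Y). X \<in> A // \<theta> \<and> Y \<in> A // \<theta> \<and> (\<exists>p\<in>X. \<exists>q\<in>Y. (p, q) \<in> r)}"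

definition natural_dcpo_congruence :: "'a set \<Rightarrow> ('a \<times> 'a) set \<Rightarrow> ('a \<times> 'a) set \<Rightarrow> bool" where
  "natural_dcpo_congruence A r \<theta> \<longleftrightarrow>
     partial_order_on (A // \<theta>) ((quot_rel A r \<theta>)\<^sup>+) \<and>
     dcpo (A // \<theta>) ((quot_rel A r \<theta>)\<^sup>+) \<and>
     dcpo_map A r (A // \<theta>) ((quot_rel A r \<theta>)\<^sup>+) (\<lambda>p. \<theta> `` {p})"

definition theta_circle :: "'a set \<Rightarrow> ('a \<times> 'a) set \<Rightarrow> ('a \<times> 'a) set \<Rightarrow> (nat \<Rightarrow> 'a) \<Rightarrow> nat \<Rightarrow> bool" where
  "theta_circle A r \<theta> p n \<longleftrightarrow> (\<forall>i\<le>n. p i \<in> A) \<and> p 0 = p n \<and>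
     (\<forall>i\<in>{1..n}. (p (i - 1), p i) \<in> \<theta> \<or> ((p (i - 1), p i) \<in> r \<and> p (i - 1) \<noteq> p i))"

definition compatible_congruence :: "'a set \<Rightarrow> ('a \<times> 'a) set \<Rightarrow> ('a \<times> 'a) set \<Rightarrow> bool" where
  "compatible_congruence A r \<theta> \<longleftrightarrow>
     (\<forall>p n. theta_circle A r \<theta> p n \<longrightarrow> (\<forall>i\<le>n. (p 0, p i) \<in> \<theta>))"

end

theory Submission
  imports Defs
begin

lemma fin_dir_max:
  assumes "finite A" "directed A r D"
  shows "\<exists>m\<in>D. \<forall>x\<in>D. (x, m) \<in> r"
proof -
  have "D \<subseteq> A" using assms(2) unfolding directed_def by blast
  hence "finite D" using assms(1) finite_subset by blast
  thus ?thesis using assms(2) unfolding directed_def by blast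
qed

lemma fin_dcpo:
  assumes "finite A" "partial_order_on A r"
  shows "dcpo A r"
  unfolding dcpo_def
proof (intro conjI allI impI)
  show "partial_order_on A r" by fact
  fix D assume d: "directed A r D"
  then obtain m where m: "m \<in> D" "\<forall>x\<in>D. (x, m) \<in> r" using fin_dir_max assms(1) by blast
  have "m \<in> A" using m d unfolding directed_def by blast
  thus "\<exists>s. is_join A r D s" using m unfolding is_join_def by blast
qed

lemma fin_dcpo_map:
  assumes "finite A" "partial_order_on A r" "partial_order_on B s" "\<phi> ` A \<subseteq> B"
    and mono: "\<And>x y. (x, y) \<in> r \<Longrightarrow> (\<phi> x, \<phi> y) \<in> s"
  shows "dcpo_map A r B s \<phi>"
  unfolding dcpo_map_def
proof (intro conjI allI impI)
  show "\<phi> ` A \<subseteq> B" by fact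
  fix D x assume dx: "directed A r D \<and> is_join A r D x"
  then obtain m where m: "m \<in> D" "\<forall>x\<in>D. (x, m) \<in> r" using fin_dir_max assms(1) by blast
  have DA: "D \<subseteq> A" using dx unfolding directed_def by blast
  have "(x, m) \<in> r" using dx m DA unfolding is_join_def by blast
  moreover have "(m, x) \<in> r" using dx m unfolding is_join_def by blast
  ultimately have xm: "x = m" using assms(2) unfolding partial_order_on_def antisym_def by blast
  have ub: "\<forall>y\<in>\<phi> ` D. (y, \<phi> m) \<in> s" using m mono by blast
  have "\<phi> m \<in> B" using m DA assms(4) by blast
  show "directed B s (\<phi> ` D)" unfolding directed_def
    using ub m DA assms(4) by blast
  show "is_join B s (\<phi> ` D) (\<phi> x)" unfolding is_join_def xm
    using ub m \<open>\<phi> m \<in> B\<close> by blast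
qed

lemma path_seq:
  assumes "(a, b) \<in> E\<^sup>*"
  shows "\<exists>f n. f 0 = a \<and> f n = b \<and> (\<forall>i<n. (f i, f (Suc i)) \<in> E)"
  using assms rtrancl_power relpow_fun_conv by metis

theorem mainTheorem13:
  fixes P :: "'a set" and le :: "('a \<times> 'a) set" and \<theta> :: "('a \<times> 'a) set"
  assumes "finite P" and "partial_order_on P le" and "equiv P \<theta>"
  shows "natural_dcpo_congruence P le \<theta> \<longleftrightarrow> compatible_congruence P le \<theta>"
proof -
  define Q where "Q = P // \<theta>"
  define R where "R = quot_rel P le \<theta>"
  define S where "S = R\<^sup>+"
  have eq: "equiv P \<theta>" by fact
  have leP: "le \<subseteq> P \<times> P" using assms(2) unfolding partial_order_on_def preorder_on_def by blast
  have RQ: "R \<subseteq> Q \<times> Q" unfolding R_def Q_def quot_rel_def by blast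
  have SQ: "S \<subseteq> Q \<times> Q" unfolding S_def using RQ trancl_subset_Sigma by blast
  have cls: "\<theta> `` {x} \<in> Q" if "x \<in> P" for x using that unfolding Q_def by (rule quotientI)
  have self: "x \<in> \<theta> `` {x}" if "x \<in> P" for x using equiv_class_self[OF eq that] .
  have mono: "(\<theta> `` {x}, \<theta> `` {y}) \<in> R" if "(x, y) \<in> le" for x y
    using that leP cls self unfolding R_def quot_rel_def Q_def by blast
  have monoS: "(\<theta> `` {x}, \<theta> `` {y}) \<in> S" if "(x, y) \<in> le" for x y
    using mono[OF that] unfolding S_def by blast
  have reflS: "refl_on Q S"
    unfolding refl_on_def
  proof
    fix X assume "X \<in> Q"
    then obtain x where "x \<in> P" "X = \<theta> `` {x}" unfolding Q_def by (auto elim: quotientE)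
    moreover have "(x, x) \<in> le" using \<open>x \<in> P\<close> assms(2)
      unfolding partial_order_on_def preorder_on_def refl_on_def by blast
    ultimately show "(X, X) \<in> S" using monoS by blast
  qed
  have transS: "trans S" unfolding S_def by simp
  have nat_iff: "natural_dcpo_congruence P le \<theta> \<longleftrightarrow> antisym S"
  proof
    assume "natural_dcpo_congruence P le \<theta>"
    thus "antisym S" by (simp add: natural_dcpo_congruence_def S_def R_def partial_order_on_def)
  next
    assume as: "antisym S"
    have po: "partial_order_on Q S"
      unfolding partial_order_on_def preorder_on_def using SQ reflS transS as by simp
    have fQ: "finite Q" unfolding Q_def using finite_quotient[OF assms(1) equiv_type[OF eq]] .
    have "dcpo Q S" using fin_dcpo[OF fQ po] .
    moreover have "dcpo_map P le Q S (\<lambda>p. \<theta> `` {p})"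
      by (rule fin_dcpo_map[OF assms(1) assms(2) po]) (use cls monoS in auto)
    ultimately show "natural_dcpo_congruence P le \<theta>"
      using po by (simp add: natural_dcpo_congruence_def S_def R_def Q_def)
  qed
  define E where "E = \<theta> \<union> le"
  have EP: "E \<subseteq> P \<times> P" unfolding E_def using leP eq unfolding equiv_def refl_on_def by blast
  have compat_iff: "compatible_congruence P le \<theta> \<longleftrightarrow>
     (\<forall>a\<in>P. \<forall>b\<in>P. (a, b) \<in> E\<^sup>* \<and> (b, a) \<in> E\<^sup>* \<longrightarrow> (a, b) \<in> \<theta>)"
  proof
    assume cc: "compatible_congruence P le \<theta>"
    show "\<forall>a\<in>P. \<forall>b\<in>P. (a, b) \<in> E\<^sup>* \<and> (b, a) \<in> E\<^sup>* \<longrightarrow> (a, b) \<in> \<theta>"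
    proof (intro ballI impI)
      fix a b assume ab: "a \<in> P" "b \<in> P" "(a, b) \<in> E\<^sup>* \<and> (b, a) \<in> E\<^sup>*"
      have ab1: "(a, b) \<in> E\<^sup>*" and ab2: "(b, a) \<in> E\<^sup>*" using ab(3) by auto
      obtain f n where f: "f 0 = a" "f n = b" "\<forall>i<n. (f i, f (Suc i)) \<in> E"
        using path_seq[OF ab1] by blast
      obtain g m where g: "g 0 = b" "g m = a" "\<forall>i<m. (g i, g (Suc i)) \<in> E"
        using path_seq[OF ab2] by blast
      define p where "p = (\<lambda>i. if i \<le> n then f i else g (i - n))"
      have step: "(p i, p (Suc i)) \<in> E" if "i < n + m" for i
      proof (cases "i < n")
        case True thus ?thesis using f unfolding p_def by auto
      next
        case False
        hence "Suc i - n = Suc (i - n)" by auto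
        moreover have "i - n < m" using that False by auto
        moreover have "p i = g (i - n)" using False f g unfolding p_def by (cases "i = n") auto
        ultimately show ?thesis using g False unfolding p_def by auto
      qed
      have inP: "p i \<in> P" if "i \<le> n + m" for i
      proof (cases "i = 0")
        case True thus ?thesis using ab f unfolding p_def by simp
      next
        case False
        hence "i - 1 < n + m" "Suc (i - 1) = i" using that by auto
        thus ?thesis using step[of "i - 1"] EP by auto
      qed
      have "theta_circle P le \<theta> p (n + m)"
        unfolding theta_circle_def
      proof (intro conjI allI impI ballI)
        show "\<And>i. i \<le> n + m \<Longrightarrow> p i \<in> P" using inP by blast
        show "p 0 = p (n + m)" using f g unfolding p_def by (cases "m = 0") auto
        fix i assume i: "i \<in> {1..n + m}"
        hence "i - 1 < n + m" "Suc (i - 1) = i" by auto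
        hence e: "(p (i - 1), p i) \<in> E" using step[of "i - 1"] by auto
        show "(p (i - 1), p i) \<in> \<theta> \<or> (p (i - 1), p i) \<in> le \<and> p (i - 1) \<noteq> p i"
        proof (cases "p (i - 1) = p i")
          case True thus ?thesis using inP[of i] i eq unfolding equiv_def refl_on_def by auto
        next
          case False thus ?thesis using e unfolding E_def by auto
        qed
      qed
      hence "(p 0, p n) \<in> \<theta>" using cc unfolding compatible_congruence_def by auto
      thus "(a, b) \<in> \<theta>" using f unfolding p_def by simp
    qed
  next
    assume H: "\<forall>a\<in>P. \<forall>b\<in>P. (a, b) \<in> E\<^sup>* \<and> (b, a) \<in> E\<^sup>* \<longrightarrow> (a, b) \<in> \<theta>"
    show "compatible_congruence P le \<theta>"
      unfolding compatible_congruence_def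
    proof (intro allI impI)
      fix p n i assume tc: "theta_circle P le \<theta> p n" and i: "i \<le> n"
      have pP: "\<And>j. j \<le> n \<Longrightarrow> p j \<in> P" using tc unfolding theta_circle_def by blast
      have st: "(p j, p (Suc j)) \<in> E" if "j < n" for j
      proof -
        have "Suc j \<in> {1..n}" using that by auto
        hence "(p (Suc j - 1), p (Suc j)) \<in> \<theta> \<or> (p (Suc j - 1), p (Suc j)) \<in> le"
          using tc unfolding theta_circle_def by blast
        thus ?thesis unfolding E_def by auto
      qed
      have path: "(p j, p k) \<in> E\<^sup>*" if "j \<le> k" "k \<le> n" for j k
        using that
      proof (induction k)
        case 0 thus ?case by simp
      next
        case (Suc k)
        show ?case
        proof (cases "j = Suc k")
          case True thus ?thesis by simp
        next
          case False
          hence "(p j, p k) \<in> E\<^sup>*" using Suc by auto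
          moreover have "(p k, p (Suc k)) \<in> E" using st Suc by auto
          ultimately show ?thesis by auto
        qed
      qed
      have a1: "(p 0, p i) \<in> E\<^sup>*" using path[of 0 i] i by simp
      have "p n = p 0" using tc unfolding theta_circle_def by simp
      moreover have "(p i, p n) \<in> E\<^sup>*" using path[of i n] i by simp
      ultimately have a2: "(p i, p 0) \<in> E\<^sup>*" by simp
      have "p 0 \<in> P" "p i \<in> P" using pP i by auto
      thus "(p 0, p i) \<in> \<theta>" using H a1 a2 by blast
    qed
  qed
  have classE: "(x, y) \<in> E\<^sup>*" if "(X, Y) \<in> S" "x \<in> X" "y \<in> Y" for X Y x y
    using that unfolding S_def
  proof (induction arbitrary: y rule: trancl_induct)
    case (base Y)
    then obtain a b where "a \<in> X" "b \<in> Y" "(a, b) \<in> le" "X \<in> Q" "Y \<in> Q"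
      unfolding R_def quot_rel_def Q_def by blast
    hence "(x, a) \<in> \<theta>" "(b, y) \<in> \<theta>" using base eq in_quotient_imp_in_rel unfolding Q_def by fast+
    thus ?case using \<open>(a, b) \<in> le\<close> unfolding E_def
      by (meson UnI1 UnI2 converse_rtrancl_into_rtrancl r_into_rtrancl rtrancl_trans)
  next
    case (step Y Z)
    then obtain a b where ab: "a \<in> Y" "b \<in> Z" "(a, b) \<in> le" "Y \<in> Q" "Z \<in> Q"
      unfolding R_def quot_rel_def Q_def by blast
    hence "(b, y) \<in> \<theta>" using step eq in_quotient_imp_in_rel unfolding Q_def by fast
    hence "(a, y) \<in> E\<^sup>*" using ab unfolding E_def
      by (meson UnI1 UnI2 converse_rtrancl_into_rtrancl r_into_rtrancl)
    moreover have "(x, a) \<in> E\<^sup>*" using step ab by blast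
    ultimately show ?case by auto
  qed
  have anti_iff: "antisym S \<longleftrightarrow> (\<forall>a\<in>P. \<forall>b\<in>P. (a, b) \<in> E\<^sup>* \<and> (b, a) \<in> E\<^sup>* \<longrightarrow> (a, b) \<in> \<theta>)"
  proof
    assume as: "antisym S"
    have Es: "(\<theta> `` {a}, \<theta> `` {b}) \<in> S\<^sup>=" if "(a, b) \<in> E\<^sup>*" for a b
      using that
    proof (induction rule: rtrancl_induct)
      case base thus ?case by simp
    next
      case (step b c)
      have "(\<theta> `` {b}, \<theta> `` {c}) \<in> S\<^sup>="
      proof (cases "(b, c) \<in> \<theta>")
        case True thus ?thesis using equiv_class_eq[OF eq True] by simp
      next
        case False thus ?thesis using step(2) monoS unfolding E_def by blast
      qed
      thus ?case using step(3) transS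
        by (metis UnE UnI1 UnI2 pair_in_Id_conv transD)
    qed
    show "\<forall>a\<in>P. \<forall>b\<in>P. (a, b) \<in> E\<^sup>* \<and> (b, a) \<in> E\<^sup>* \<longrightarrow> (a, b) \<in> \<theta>"
    proof (intro ballI impI)
      fix a b assume ab: "a \<in> P" "b \<in> P" "(a, b) \<in> E\<^sup>* \<and> (b, a) \<in> E\<^sup>*"
      have "\<theta> `` {a} = \<theta> `` {b}" using Es ab as unfolding antisym_def by blast
      thus "(a, b) \<in> \<theta>" using eq_equiv_class eq ab by metis
    qed
  next
    assume H: "\<forall>a\<in>P. \<forall>b\<in>P. (a, b) \<in> E\<^sup>* \<and> (b, a) \<in> E\<^sup>* \<longrightarrow> (a, b) \<in> \<theta>"
    show "antisym S" unfolding antisym_def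
    proof (intro allI impI)
      fix X Y assume XY: "(X, Y) \<in> S" "(Y, X) \<in> S"
      hence XQ: "X \<in> Q" "Y \<in> Q" using SQ by auto
      then obtain x y where xy: "x \<in> X" "y \<in> Y"
        using in_quotient_imp_non_empty eq unfolding Q_def by blast
      have "x \<in> P" "y \<in> P" using xy XQ in_quotient_imp_subset eq unfolding Q_def by blast+
      hence "(x, y) \<in> \<theta>" using H classE XY xy by blast
      thus "X = Y" using quotient_eqI[OF eq] XQ xy unfolding Q_def by blast
    qed
  qed
  show ?thesis using nat_iff compat_iff anti_iff by simp
qed

end
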